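(* Let $\alpha>\beta$ be positive integers, let $k\geq 2$, and let $n_1,\dots,n_k$ be integers with $n_1,n_2\geq 2\alpha+1$ and $n_3,\dots,n_k\geq \alpha+\beta-1$. If an $(\alpha,\beta)$-tour on the $n_1\times n_2$ chessboard exists, then an $(\alpha,\beta)$-tour on the $n_1\times n_2\times\cdots\times n_k$ chessboard exists.
   Context: The $n_1\times\cdots\times n_d$ chessboard is $\{1,\dots,n_1\}\times\cdots\times\{1,\dots,n_d\}\subset\mathbb{Z}^d$. An $(\alpha,\beta)$-move is a vector in $\mathbb{Z}^d$ with exactly $d-2$ coordinates equal to $0$, exactly one coordinate in $\{\pm\alpha\}$ and exactly one coordinate in $\{\pm\beta\}$. Two cells are adjacent iff their difference is an $(\alpha,\beta)$-move. An $(\alpha,\beta)$-tour is a Hamiltonian cycle in this graph. *)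

theory Defs
  imports Main
begin

definition board :: "int list \<Rightarrow> int list set" where
  "board ns = {x. length x = length ns \<and> (\<forall>i<length ns. 1 \<le> x ! i \<and> x ! i \<le> ns ! i)}"

definition ab_move :: "int \<Rightarrow> int \<Rightarrow> nat \<Rightarrow> int list \<Rightarrow> bool" where
  "ab_move a b d v \<longleftrightarrow> length v = d \<and> 2 \<le> d \<and>
     card {i. i < d \<and> v ! i = 0} = d - 2 \<and>
     card {i. i < d \<and> (v ! i = a \<or> v ! i = - a)} = 1 \<and>
     card {i. i < d \<and> (v ! i = b \<or> v ! i = - b)} = 1"

definition ab_adj :: "int \<Rightarrow> int \<Rightarrow> nat \<Rightarrow> int list \<Rightarrow> int list \<Rightarrow> bool" where
  "ab_adj a b d x y \<longleftrightarrow> ab_move a b d (map2 (-) y x)"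

(* An (alpha,beta)-tour: a Hamiltonian cycle of the adjacency graph on the board,
   given as a cyclic list of all cells, each exactly once, with consecutive cells
   (including last -> first) adjacent; a cycle has at least 3 vertices. *)
definition ab_tour :: "int \<Rightarrow> int \<Rightarrow> int list \<Rightarrow> int list list \<Rightarrow> bool" where
  "ab_tour a b ns c \<longleftrightarrow> distinct c \<and> set c = board ns \<and> 3 \<le> length c \<and>
     (\<forall>i<length c. ab_adj a b (length ns) (c ! i) (c ! ((i + 1) mod length c)))"

definition has_ab_tour :: "int \<Rightarrow> int \<Rightarrow> int list \<Rightarrow> bool" where
  "has_ab_tour a b ns \<longleftrightarrow> (\<exists>c. ab_tour a b ns c)"

end

theory Submission
  imports Defs
begin


definition cyc :: "('a \<Rightarrow> 'a \<Rightarrow> bool) \<Rightarrow> 'a list \<Rightarrow> bool" where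
 "cyc R c \<longleftrightarrow> distinct c \<and> 3 \<le> length c \<and> (\<forall>i<length c. R (c!i) (c!((i+1) mod length c)))"

definition edge_in :: "'a list \<Rightarrow> 'a \<Rightarrow> 'a \<Rightarrow> bool" where
 "edge_in c x y \<longleftrightarrow> (\<exists>i<length c. (c!i = x \<and> c!((i+1) mod length c) = y) \<or> (c!i = y \<and> c!((i+1) mod length c) = x))"

definition pth :: "('a \<Rightarrow> 'a \<Rightarrow> bool) \<Rightarrow> 'a list \<Rightarrow> bool" where
 "pth R P \<longleftrightarrow> distinct P \<and> (\<forall>i. Suc i < length P \<longrightarrow> R (P!i) (P!Suc i))"

definition pedge :: "'a list \<Rightarrow> 'a \<Rightarrow> 'a \<Rightarrow> bool" where
 "pedge P x y \<longleftrightarrow> (\<exists>i. Suc i < length P \<and> ((P!i = x \<and> P!Suc i = y) \<or> (P!i = y \<and> P!Suc i = x)))"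

lemma edge_in_sym: "edge_in c x y \<Longrightarrow> edge_in c y x"
  unfolding edge_in_def by blast

lemma pedge_rev: "pedge P x y \<Longrightarrow> pedge (rev P) x y"
proof -
  assume "pedge P x y"
  then obtain i where i: "Suc i < length P" "(P!i = x \<and> P!Suc i = y) \<or> (P!i = y \<and> P!Suc i = x)"
    unfolding pedge_def by blast
  define k where "k = length P - Suc (Suc i)"
  have k: "Suc k < length (rev P)" using i by (simp add: k_def)
  have "rev P ! k = P ! Suc i" using i by (simp add: rev_nth k_def Suc_diff_Suc)
  moreover have "rev P ! Suc k = P ! i" using i by (simp add: rev_nth k_def Suc_diff_Suc)
  ultimately show ?thesis using i k unfolding pedge_def by metis
qed

lemma pth_rev: assumes "symp R" "pth R P" shows "pth R (rev P)"
  unfolding pth_def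
proof (intro conjI allI impI)
  show "distinct (rev P)" using assms(2) by (simp add: pth_def)
  fix i assume i: "Suc i < length (rev P)"
  define k where "k = length P - Suc (Suc i)"
  have k: "Suc k < length P" using i by (simp add: k_def)
  have "rev P ! i = P ! Suc k" using i by (simp add: rev_nth k_def Suc_diff_Suc)
  moreover have "rev P ! Suc i = P ! k" using i by (simp add: rev_nth k_def Suc_diff_Suc)
  ultimately show "R (rev P ! i) (rev P ! Suc i)" using assms k unfolding pth_def
    by (metis sympD)
qed

lemma rot_path:
  assumes "cyc R c" "i < length c"
  defines "P \<equiv> rotate (Suc i) c"
  shows "pth R P \<and> set P = set c \<and> length P = length c \<and> P!0 = c!((i+1) mod length c)
     \<and> P!(length P - 1) = c!i
     \<and> (\<forall>j<length c. j \<noteq> i \<longrightarrow> pedge P (c!j) (c!((j+1) mod length c)))"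
proof -
  let ?L = "length c"
  have L3: "3 \<le> ?L" using assms(1) by (simp add: cyc_def)
  have nthP: "\<And>k. k < ?L \<Longrightarrow> P!k = c!((k + Suc i) mod ?L)"
    unfolding P_def using nth_rotate[of _ c "Suc i"] by (simp add: add.commute del: rotate_Suc)
  have lP: "length P = ?L" "set P = set c" "distinct P = distinct c" by (simp_all add: P_def del: rotate_Suc)
  have "pth R P" unfolding pth_def
  proof (intro conjI allI impI)
    show "distinct P" using assms(1) lP by (simp add: cyc_def)
    fix k assume k: "Suc k < length P"
    hence k': "Suc k < ?L" using lP by simp
    have "P!Suc k = c!(((k + Suc i) mod ?L + 1) mod ?L)"
      using nthP[of "Suc k"] k' by (simp add: mod_Suc_eq)
    moreover have "(k + Suc i) mod ?L < ?L" using L3 by (meson mod_less_divisor less_le_trans zero_less_numeral)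
    ultimately show "R (P!k) (P!Suc k)" using assms(1) nthP[of k] k' unfolding cyc_def by auto
  qed
  moreover have "P!0 = c!((i+1) mod ?L)"
  proof -
    have "0 < ?L" using L3 by linarith
    thus ?thesis using nthP[of 0] by simp
  qed
  moreover have "P!(length P - 1) = c!i"
  proof -
    have "?L - 1 < ?L" using L3 by simp
    hence "P!(length P - 1) = c!((?L - 1 + Suc i) mod ?L)" using nthP lP by simp
    also have "(?L - 1 + Suc i) = i + ?L" using L3 by simp
    finally show ?thesis using assms(2) by simp
  qed
  moreover have "\<forall>j<?L. j \<noteq> i \<longrightarrow> pedge P (c!j) (c!((j+1) mod ?L))"
  proof (intro allI impI)
    fix j assume j: "j < ?L" "j \<noteq> i"
    define k where "k = (j + ?L - Suc i) mod ?L"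
    have kl: "k < ?L" unfolding k_def using L3 by (meson mod_less_divisor less_le_trans zero_less_numeral)
    have kj: "(k + Suc i) mod ?L = j"
    proof -
      have "(k + Suc i) mod ?L = ((j + ?L - Suc i) mod ?L + Suc i) mod ?L" by (simp only: k_def)
      also have "\<dots> = ((j + ?L - Suc i) + Suc i) mod ?L" by (rule mod_add_left_eq)
      also have "(j + ?L - Suc i) + Suc i = j + ?L" using assms(2) by simp
      finally show ?thesis using j by simp
    qed
    have ksuc: "Suc k < ?L"
    proof (rule ccontr)
      assume "\<not> Suc k < ?L" hence "k = ?L - 1" using kl by simp
      hence "(?L - 1 + Suc i) mod ?L = j" using kj by simp
      moreover have "?L - 1 + Suc i = i + ?L" using L3 by simp
      ultimately show False using j assms(2) by simp
    qed
    have "P!k = c!j" using nthP[OF kl] kj by simp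
    moreover have "P!Suc k = c!((j+1) mod ?L)"
    proof -
      have "P!Suc k = c!((Suc k + Suc i) mod ?L)" using nthP[OF ksuc] by simp
      also have "(Suc k + Suc i) mod ?L = (j+1) mod ?L" using kj by (metis add_Suc mod_Suc_eq Suc_eq_plus1)
      finally show ?thesis .
    qed
    moreover have "Suc k < length P" using ksuc lP by simp
    ultimately show "pedge P (c!j) (c!((j+1) mod ?L))" unfolding pedge_def
      by blast
  qed
  moreover note lP
  ultimately show ?thesis by blast
qed

lemma cyc_path:
  assumes "cyc R c" "symp R" "edge_in c x y"
  shows "\<exists>P. pth R P \<and> set P = set c \<and> length P = length c \<and> P!0 = y \<and> P!(length P - 1) = x
     \<and> (\<forall>u v. edge_in c u v \<longrightarrow> {u,v} \<noteq> {x,y} \<longrightarrow> pedge P u v)"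
proof -
  let ?L = "length c"
  obtain i where i: "i < ?L" "(c!i = x \<and> c!((i+1) mod ?L) = y) \<or> (c!i = y \<and> c!((i+1) mod ?L) = x)"
    using assms(3) unfolding edge_in_def by blast
  define P where "P = rotate (Suc i) c"
  note R = rot_path[OF assms(1) i(1), folded P_def]
  have L3: "3 \<le> ?L" using assms(1) by (simp add: cyc_def)
  have dc: "distinct c" using assms(1) by (simp add: cyc_def)
  have E: "\<forall>u v. edge_in c u v \<longrightarrow> {u,v} \<noteq> {c!i, c!((i+1) mod ?L)} \<longrightarrow> pedge P u v"
  proof (intro allI impI)
    fix u v assume uv: "edge_in c u v" "{u,v} \<noteq> {c!i, c!((i+1) mod ?L)}"
    then obtain j where j: "j < ?L" "(c!j = u \<and> c!((j+1) mod ?L) = v) \<or> (c!j = v \<and> c!((j+1) mod ?L) = u)"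
      unfolding edge_in_def by blast
    have "j \<noteq> i" using j uv(2) by auto
    hence "pedge P (c!j) (c!((j+1) mod ?L))" using R j(1) by blast
    thus "pedge P u v" using j(2) unfolding pedge_def by metis
  qed
  show ?thesis
  proof (cases "c!i = x \<and> c!((i+1) mod ?L) = y")
    case True
    hence "{c!i, c!((i+1) mod ?L)} = {x,y}" by simp
    hence "\<forall>u v. edge_in c u v \<longrightarrow> {u,v} \<noteq> {x,y} \<longrightarrow> pedge P u v" using E by simp
    moreover have "P!0 = y" "P!(length P - 1) = x" using R True by blast+
    ultimately show ?thesis using R by blast
  next
    case False
    hence xy: "c!i = y" "c!((i+1) mod ?L) = x" using i by auto
    have lP: "length P = ?L" using R by simp
    have "pth R (rev P)" using pth_rev assms(2) R by blast
    moreover have "rev P ! 0 = y"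
    proof -
      have "0 < length P" using L3 lP by linarith
      hence "rev P ! 0 = P ! (length P - 1)" using rev_nth[of 0 P] by simp
      thus ?thesis using R xy lP by simp
    qed
    moreover have "rev P ! (length (rev P) - 1) = x"
      using R xy L3 by (simp add: rev_nth lP)
    moreover have "\<forall>u v. edge_in c u v \<longrightarrow> {u,v} \<noteq> {x,y} \<longrightarrow> pedge (rev P) u v"
    proof (intro allI impI)
      fix u v assume uv: "edge_in c u v" "{u,v} \<noteq> {x,y}"
      have "{c!i, c!((i+1) mod ?L)} = {x,y}" using xy by (simp add: insert_commute)
      hence "pedge P u v" using E uv by simp
      thus "pedge (rev P) u v" by (rule pedge_rev)
    qed
    ultimately show ?thesis using R by (intro exI[of _ "rev P"]) simp
  qed
qed

lemma pedge_app1: "pedge P u v \<Longrightarrow> edge_in (P @ Q) u v"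
proof -
  assume "pedge P u v"
  then obtain i where i: "Suc i < length P" "(P!i = u \<and> P!Suc i = v) \<or> (P!i = v \<and> P!Suc i = u)"
    unfolding pedge_def by blast
  have "(i+1) mod length (P@Q) = Suc i" using i by simp
  thus ?thesis using i unfolding edge_in_def
    by (intro exI[of _ i]) (auto simp: nth_append)
qed

lemma pedge_app2: "pedge Q u v \<Longrightarrow> edge_in (P @ Q) u v"
proof -
  assume "pedge Q u v"
  then obtain i where i: "Suc i < length Q" "(Q!i = u \<and> Q!Suc i = v) \<or> (Q!i = v \<and> Q!Suc i = u)"
    unfolding pedge_def by blast
  have "(length P + i + 1) mod length (P@Q) = length P + Suc i" using i by simp
  thus ?thesis using i unfolding edge_in_def
    by (intro exI[of _ "length P + i"]) (auto simp: nth_append)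
qed

lemma merge_cyc:
  assumes "cyc R c" "cyc R d" "symp R" "set c \<inter> set d = {}"
    "edge_in c x y" "edge_in d p q" "R x p" "R y q"
  shows "\<exists>e. cyc R e \<and> set e = set c \<union> set d
     \<and> (\<forall>u v. edge_in c u v \<longrightarrow> {u,v} \<noteq> {x,y} \<longrightarrow> edge_in e u v)
     \<and> (\<forall>u v. edge_in d u v \<longrightarrow> {u,v} \<noteq> {p,q} \<longrightarrow> edge_in e u v)"
proof -
  obtain P where P: "pth R P" "set P = set c" "length P = length c" "P!0 = y" "P!(length P - 1) = x"
     "\<forall>u v. edge_in c u v \<longrightarrow> {u,v} \<noteq> {x,y} \<longrightarrow> pedge P u v"
    using cyc_path[OF assms(1,3,5)] by blast
  obtain Q where Q: "pth R Q" "set Q = set d" "length Q = length d" "Q!0 = p" "Q!(length Q - 1) = q"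
     "\<forall>u v. edge_in d u v \<longrightarrow> {u,v} \<noteq> {q,p} \<longrightarrow> pedge Q u v"
    using cyc_path[OF assms(2,3) edge_in_sym[OF assms(6)]] by blast
  have lc: "3 \<le> length c" using assms(1) by (simp add: cyc_def)
  have ld: "3 \<le> length d" using assms(2) by (simp add: cyc_def)
  let ?e = "P @ Q"
  have "cyc R ?e" unfolding cyc_def
  proof (intro conjI allI impI)
    show "distinct ?e" using P(1,2) Q(1,2) assms(4) by (simp add: pth_def)
    show "3 \<le> length ?e" using lc P(3) by simp
    fix i assume i: "i < length ?e"
    consider "Suc i < length P" | "Suc i = length P" | "length P \<le> i" "Suc i < length ?e"
      | "Suc i = length ?e" using i by linarith
    thus "R (?e!i) (?e!((i+1) mod length ?e))"
    proof cases
      case 1 thus ?thesis using P(1) by (simp add: pth_def nth_append)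
    next
      case 2
      have "?e!i = x" using 2 P(5) by (simp add: nth_append) (metis diff_Suc_1')
      moreover have "?e!((i+1) mod length ?e) = p"
      proof -
        have "length P < length P + length Q" using Q(3) ld by linarith
        hence "(i+1) mod length ?e = length P" using 2 by simp
        thus ?thesis using Q(4) by (simp add: nth_append)
      qed
      ultimately show ?thesis using assms(7) by simp
    next
      case 3
      define k where "k = i - length P"
      have k: "i = length P + k" "Suc k < length Q" using 3 by (simp_all add: k_def)
      thus ?thesis using Q(1) by (simp add: pth_def nth_append)
    next
      case 4
      have "i - length P = length Q - 1" "\<not> i < length P" using 4 Q(3) ld by simp_all
      hence "?e!i = q" using Q(5) by (simp add: nth_append)
      moreover have "?e!((i+1) mod length ?e) = y"
      proof -
        have "(i+1) mod length ?e = 0" using 4 by simp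
        moreover have "0 < length P" using P(3) lc by linarith
        ultimately show ?thesis using P(4) by (simp add: nth_append)
      qed
      ultimately show ?thesis using assms(8,3) by (metis sympD)
    qed
  qed
  moreover have "set ?e = set c \<union> set d" by (simp only: set_append P(2) Q(2))
  moreover have "\<forall>u v. edge_in c u v \<longrightarrow> {u,v} \<noteq> {x,y} \<longrightarrow> edge_in ?e u v"
  proof (intro allI impI)
    fix u v assume uv: "edge_in c u v" "{u,v} \<noteq> {x,y}"
    hence "pedge P u v" using P(6) by blast
    thus "edge_in ?e u v" by (rule pedge_app1)
  qed
  moreover have "\<forall>u v. edge_in d u v \<longrightarrow> {u,v} \<noteq> {p,q} \<longrightarrow> edge_in ?e u v"
  proof (intro allI impI)
    fix u v assume uv: "edge_in d u v" "{u,v} \<noteq> {p,q}"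
    hence "{u,v} \<noteq> {q,p}" by (simp add: insert_commute)
    hence "pedge Q u v" using Q(6) uv(1) by blast
    thus "edge_in ?e u v" by (rule pedge_app2)
  qed
  ultimately show ?thesis by blast
qed



lemma abs_eq_pos: "(0::int) < a \<Longrightarrow> (\<bar>x\<bar> = a) = (x = a \<or> x = - a)" by auto

lemma move_iff:
  assumes ab: "0 < b" "b < a"
  shows "ab_move a b d v \<longleftrightarrow> length v = d \<and> (\<exists>i<d. \<exists>j<d. i \<noteq> j \<and> \<bar>v!i\<bar> = a \<and> \<bar>v!j\<bar> = b \<and> (\<forall>k<d. k \<noteq> i \<longrightarrow> k \<noteq> j \<longrightarrow> v!k = 0))"
proof
  assume m: "ab_move a b d v"
  hence lv: "length v = d" and d2: "2 \<le> d" and cz: "card {i. i < d \<and> v ! i = 0} = d - 2"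
    and ca: "card {i. i < d \<and> (v ! i = a \<or> v ! i = - a)} = 1"
    and cb: "card {i. i < d \<and> (v ! i = b \<or> v ! i = - b)} = 1" unfolding ab_move_def by auto
  obtain i where i: "{k. k < d \<and> (v ! k = a \<or> v ! k = - a)} = {i}" using ca card_1_singletonE by blast
  obtain j where j: "{k. k < d \<and> (v ! k = b \<or> v ! k = - b)} = {j}" using cb card_1_singletonE by blast
  have i1: "i < d" "v!i = a \<or> v!i = -a" using i by auto
  have j1: "j < d" "v!j = b \<or> v!j = -b" using j by auto
  have ij: "i \<noteq> j" using i1 j1 ab by auto
  have sub: "{k. k < d \<and> v ! k = 0} \<subseteq> {..<d} - {i,j}" using i1 j1 ab by auto
  have cc: "card ({..<d} - {i,j}) = d - 2" using i1 j1 ij by (simp add: card_Diff_subset)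
  have fin: "finite ({..<d} - {i,j})" by simp
  have eq: "{k. k < d \<and> v ! k = 0} = {..<d} - {i,j}"
    by (rule card_subset_eq[OF fin sub]) (simp only: cc cz)
  show "length v = d \<and> (\<exists>i<d. \<exists>j<d. i \<noteq> j \<and> \<bar>v!i\<bar> = a \<and> \<bar>v!j\<bar> = b \<and> (\<forall>k<d. k \<noteq> i \<longrightarrow> k \<noteq> j \<longrightarrow> v!k = 0))"
  proof -
    have z: "\<forall>k<d. k \<noteq> i \<longrightarrow> k \<noteq> j \<longrightarrow> v!k = 0"
    proof (intro allI impI)
      fix k assume "k < d" "k \<noteq> i" "k \<noteq> j"
      hence "k \<in> {..<d} - {i,j}" by simp
      hence "k \<in> {k. k < d \<and> v ! k = 0}" by (simp only: eq)
      thus "v!k = 0" by simp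
    qed
    have ai: "\<bar>v!i\<bar> = a" using i1(2) ab by auto
    have bj: "\<bar>v!j\<bar> = b" using j1(2) ab by auto
    show ?thesis
      apply (rule conjI, rule lv)
      apply (rule exI[of _ i], rule conjI, rule i1(1))
      apply (rule exI[of _ j], rule conjI, rule j1(1))
      using ij ai bj z by simp
  qed
next
  assume "length v = d \<and> (\<exists>i<d. \<exists>j<d. i \<noteq> j \<and> \<bar>v!i\<bar> = a \<and> \<bar>v!j\<bar> = b \<and> (\<forall>k<d. k \<noteq> i \<longrightarrow> k \<noteq> j \<longrightarrow> v!k = 0))"
  then obtain i j where lv: "length v = d" and ij: "i < d" "j < d" "i \<noteq> j" "\<bar>v!i\<bar> = a" "\<bar>v!j\<bar> = b"
    and z: "\<forall>k<d. k \<noteq> i \<longrightarrow> k \<noteq> j \<longrightarrow> v!k = 0" by blast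
  have d2: "2 \<le> d" using ij by linarith
  have Z: "{k. k < d \<and> v ! k = 0} = {..<d} - {i,j}" using ij z ab by force
  have A: "{k. k < d \<and> (v ! k = a \<or> v ! k = - a)} = {i}" using ij z ab by force
  have B: "{k. k < d \<and> (v ! k = b \<or> v ! k = - b)} = {j}" using ij z ab by force
  have "card ({..<d} - {i,j}) = d - 2" using ij by (simp add: card_Diff_subset)
  thus "ab_move a b d v" unfolding ab_move_def using Z A B lv d2 by simp
qed

lemma adj_iff:
  assumes ab: "0 < b" "b < a" and l: "length x = d" "length y = d"
  shows "ab_adj a b d x y \<longleftrightarrow> (\<exists>i<d. \<exists>j<d. i \<noteq> j \<and> \<bar>y!i - x!i\<bar> = a \<and> \<bar>y!j - x!j\<bar> = b \<and> (\<forall>k<d. k \<noteq> i \<longrightarrow> k \<noteq> j \<longrightarrow> y!k = x!k))"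
proof -
  have len: "length (map2 (-) y x) = d" using l by simp
  have nth: "\<And>k. k < d \<Longrightarrow> map2 (-) y x ! k = y!k - x!k" using l by simp
  show ?thesis
  proof
    assume "ab_adj a b d x y"
    hence "ab_move a b d (map2 (-) y x)" by (simp only: ab_adj_def)
    then obtain i j where ij: "i<d" "j<d" "i \<noteq> j" "\<bar>map2 (-) y x!i\<bar> = a" "\<bar>map2 (-) y x!j\<bar> = b"
      "\<forall>k<d. k \<noteq> i \<longrightarrow> k \<noteq> j \<longrightarrow> map2 (-) y x!k = 0" unfolding move_iff[OF ab] by blast
    have r: "\<forall>k<d. k \<noteq> i \<longrightarrow> k \<noteq> j \<longrightarrow> y!k = x!k"
    proof (intro allI impI)
      fix k assume "k<d" "k \<noteq> i" "k \<noteq> j"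
      thus "y!k = x!k" using ij(6) nth[of k] by simp
    qed
    have ai: "\<bar>y!i - x!i\<bar> = a" "\<bar>y!j - x!j\<bar> = b" using ij(4,5) nth[OF ij(1)] nth[OF ij(2)] by simp_all
    show "\<exists>i<d. \<exists>j<d. i \<noteq> j \<and> \<bar>y!i - x!i\<bar> = a \<and> \<bar>y!j - x!j\<bar> = b \<and> (\<forall>k<d. k \<noteq> i \<longrightarrow> k \<noteq> j \<longrightarrow> y!k = x!k)"
      apply (rule exI[of _ i], rule conjI, rule ij(1))
      apply (rule exI[of _ j], rule conjI, rule ij(2))
      using ij(3) ai r by simp
  next
    assume "\<exists>i<d. \<exists>j<d. i \<noteq> j \<and> \<bar>y!i - x!i\<bar> = a \<and> \<bar>y!j - x!j\<bar> = b \<and> (\<forall>k<d. k \<noteq> i \<longrightarrow> k \<noteq> j \<longrightarrow> y!k = x!k)"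
    then obtain i j where ij: "i<d" "j<d" "i \<noteq> j" "\<bar>y!i - x!i\<bar> = a" "\<bar>y!j - x!j\<bar> = b"
      "\<forall>k<d. k \<noteq> i \<longrightarrow> k \<noteq> j \<longrightarrow> y!k = x!k" by blast
    have r: "\<forall>k<d. k \<noteq> i \<longrightarrow> k \<noteq> j \<longrightarrow> map2 (-) y x!k = 0"
    proof (intro allI impI)
      fix k assume "k<d" "k \<noteq> i" "k \<noteq> j"
      thus "map2 (-) y x!k = 0" using ij(6) nth[of k] by simp
    qed
    have ai: "\<bar>map2 (-) y x!i\<bar> = a" "\<bar>map2 (-) y x!j\<bar> = b" using ij(4,5) nth[OF ij(1)] nth[OF ij(2)] by simp_all
    have "ab_move a b d (map2 (-) y x)" unfolding move_iff[OF ab]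
      apply (rule conjI, rule len)
      apply (rule exI[of _ i], rule conjI, rule ij(1))
      apply (rule exI[of _ j], rule conjI, rule ij(2))
      using ij(3) ai r by simp
    thus "ab_adj a b d x y" by (simp only: ab_adj_def)
  qed
qed

lemma adj_sym:
  assumes ab: "0 < b" "b < a" and l: "length x = d" "length y = d" and "ab_adj a b d x y"
  shows "ab_adj a b d y x"
proof -
  obtain i j where "i<d" "j<d" "i \<noteq> j" "\<bar>y!i - x!i\<bar> = a" "\<bar>y!j - x!j\<bar> = b" "\<forall>k<d. k \<noteq> i \<longrightarrow> k \<noteq> j \<longrightarrow> y!k = x!k"
    using assms adj_iff by blast
  thus ?thesis using adj_iff[OF ab l(2,1)] by (metis abs_minus_commute)
qed

lemma adj_intro:
  assumes ab: "0 < b" "b < a" and l: "length x = d" "length y = d"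
    and h: "i<d" "k<d" "i\<noteq>k" "\<bar>y!i - x!i\<bar> = a" "\<bar>y!k - x!k\<bar> = b" "\<forall>l<d. l\<noteq>i \<longrightarrow> l\<noteq>k \<longrightarrow> y!l = x!l"
  shows "ab_adj a b d x y"
proof -
  have "\<exists>i<d. \<exists>j<d. i \<noteq> j \<and> \<bar>y!i - x!i\<bar> = a \<and> \<bar>y!j - x!j\<bar> = b \<and> (\<forall>k<d. k \<noteq> i \<longrightarrow> k \<noteq> j \<longrightarrow> y!k = x!k)"
    apply (rule exI[of _ i], rule conjI, rule h(1))
    apply (rule exI[of _ k], rule conjI, rule h(2))
    using h(3-6) by simp
  thus ?thesis using adj_iff[OF ab l] by simp
qed

definition shift :: "int \<Rightarrow> nat \<Rightarrow> int list \<Rightarrow> int list \<Rightarrow> bool" where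
  "shift s d u v \<longleftrightarrow> length u = d \<and> length v = d \<and> (\<exists>i<d. \<bar>v!i - u!i\<bar> = s \<and> (\<forall>k<d. k \<noteq> i \<longrightarrow> v!k = u!k))"

lemma adj_lay:
  assumes ab: "0 < b" "b < a" and l: "length x = d" "length y = d" and "ab_adj a b d x y"
  shows "ab_adj a b (Suc d) (x@[j]) (y@[j])"
proof -
  obtain i k where ik: "i<d" "k<d" "i \<noteq> k" "\<bar>y!i - x!i\<bar> = a" "\<bar>y!k - x!k\<bar> = b" "\<forall>l<d. l \<noteq> i \<longrightarrow> l \<noteq> k \<longrightarrow> y!l = x!l"
    using assms adj_iff by blast
  have "\<forall>l<Suc d. l \<noteq> i \<longrightarrow> l \<noteq> k \<longrightarrow> (y@[j])!l = (x@[j])!l"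
  proof (intro allI impI)
    fix l assume "l < Suc d" "l \<noteq> i" "l \<noteq> k"
    thus "(y@[j])!l = (x@[j])!l" using ik(6) l by (cases "l < d") (auto simp: nth_append)
  qed
  moreover have "(y@[j])!i = y!i" "(x@[j])!i = x!i" "(y@[j])!k = y!k" "(x@[j])!k = x!k"
    using ik l by (simp_all add: nth_append)
  ultimately have F: "\<bar>(y@[j])!i - (x@[j])!i\<bar> = a" "\<bar>(y@[j])!k - (x@[j])!k\<bar> = b"
    "\<forall>l<Suc d. l \<noteq> i \<longrightarrow> l \<noteq> k \<longrightarrow> (y@[j])!l = (x@[j])!l" using ik by simp_all
  have L: "i < Suc d" "k < Suc d" using ik by simp_all
  have lx: "length (x@[j]) = Suc d" "length (y@[j]) = Suc d" using l by simp_all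
  show ?thesis by (rule adj_intro[OF ab lx L ik(3) F])
qed

lemma adj_cross:
  assumes ab: "0 < b" "b < a" and sh: "shift s d u v" and st: "(s = b \<and> t = a) \<or> (s = a \<and> t = b)"
  shows "ab_adj a b (Suc d) (u@[j]) (v@[j+t])"
proof -
  obtain i where i: "i < d" "\<bar>v!i - u!i\<bar> = s" "\<forall>k<d. k \<noteq> i \<longrightarrow> v!k = u!k"
    and l: "length u = d" "length v = d" using sh unfolding shift_def by blast
  have lu: "length (u@[j]) = Suc d" "length (v@[j+t]) = Suc d" using l by simp_all
  have vi: "(v@[j+t])!i - (u@[j])!i = v!i - u!i" using i l by (simp add: nth_append)
  have vd: "(v@[j+t])!d - (u@[j])!d = t" using l by (simp add: nth_append)
  have rest: "\<forall>k<Suc d. k \<noteq> i \<longrightarrow> k \<noteq> d \<longrightarrow> (v@[j+t])!k = (u@[j])!k"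
  proof (intro allI impI)
    fix k assume "k < Suc d" "k \<noteq> i" "k \<noteq> d"
    hence "k < d" by simp
    thus "(v@[j+t])!k = (u@[j])!k" using i(3) l \<open>k \<noteq> i\<close> by (simp add: nth_append)
  qed
  have "i \<noteq> d" using i by simp
  have rest': "\<forall>k<Suc d. k \<noteq> d \<longrightarrow> k \<noteq> i \<longrightarrow> (v@[j+t])!k = (u@[j])!k" using rest by blast
  have lt: "i < Suc d" "d < Suc d" using i by simp_all
  show ?thesis
  proof (cases "s = b \<and> t = a")
    case True
    hence "\<bar>(v@[j+t])!d - (u@[j])!d\<bar> = a" "\<bar>(v@[j+t])!i - (u@[j])!i\<bar> = b" using vd vi i ab by auto
    thus ?thesis using adj_intro[OF ab lu lt(2,1) _ _ _ rest'] \<open>i \<noteq> d\<close> by simp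
  next
    case False
    hence st': "s = a" "t = b" using st by auto
    hence "\<bar>(v@[j+t])!i - (u@[j])!i\<bar> = a" "\<bar>(v@[j+t])!d - (u@[j])!d\<bar> = b" using vd vi i ab by auto
    thus ?thesis using adj_intro[OF ab lu lt(1,2) _ _ _ rest] \<open>i \<noteq> d\<close> by simp
  qed
qed

lemma shift_lay: "shift s d u v \<Longrightarrow> shift s (Suc d) (u@[j]) (v@[j])"
  unfolding shift_def
  apply (elim conjE exE)
  subgoal for i
    apply (intro conjI exI[of _ i])
    apply (auto simp: nth_append less_Suc_eq)
    done
  done

lemma cyc_lay:
  assumes ab: "0 < b" "b < a" and c: "cyc (ab_adj a b d) C" and l: "\<forall>x\<in>set C. length x = d"
  shows "cyc (ab_adj a b (Suc d)) (map (\<lambda>u. u@[j]) C)"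
  unfolding cyc_def
proof (intro conjI allI impI)
  show "distinct (map (\<lambda>u. u@[j]) C)" using c by (simp add: cyc_def distinct_map inj_on_def)
  show "3 \<le> length (map (\<lambda>u. u@[j]) C)" using c by (simp add: cyc_def)
  fix i assume i: "i < length (map (\<lambda>u. u@[j]) C)"
  let ?i' = "(i+1) mod length C"
  have "0 < length C" using i by (simp only: length_map)
  hence i': "?i' < length C" by simp
  have "ab_adj a b d (C!i) (C!?i')" using c i by (simp add: cyc_def)
  moreover have "length (C!i) = d" "length (C!?i') = d" using l i i' by simp_all
  ultimately have "ab_adj a b (Suc d) (C!i@[j]) (C!?i'@[j])" using adj_lay[OF ab] by blast
  thus "ab_adj a b (Suc d) (map (\<lambda>u. u@[j]) C ! i) (map (\<lambda>u. u@[j]) C ! ((i+1) mod length (map (\<lambda>u. u@[j]) C)))"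
    using i i' by simp
qed

lemma edge_lay: assumes "edge_in C x y" shows "edge_in (map (\<lambda>u. u@[j]) C) (x@[j]) (y@[j])"
proof -
  obtain i where i: "i < length C" "(C!i = x \<and> C!((i+1) mod length C) = y) \<or> (C!i = y \<and> C!((i+1) mod length C) = x)"
    using assms unfolding edge_in_def by blast
  have "0 < length C" using i by linarith
  hence "(i+1) mod length C < length C" by simp
  thus ?thesis using i unfolding edge_in_def by (intro exI[of _ i]) auto
qed

lemma dbl_lay: "({x@[j], y@[j]} = {x'@[j'], y'@[j']}) \<longleftrightarrow> j = j' \<and> {x,y} = {x',y'}"
  by (auto simp: doubleton_eq_iff)

lemma board_snoc: "board (ns@[m]) = {u@[j] | u j. u \<in> board ns \<and> 1 \<le> j \<and> j \<le> m}"
proof (intro set_eqI iffI)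
  fix x assume x: "x \<in> board (ns@[m])"
  hence lx: "length x = Suc (length ns)" by (simp add: board_def)
  then obtain u j where u: "x = u@[j]" by (metis append_butlast_last_id length_0_conv nat.distinct(1))
  have lu: "length u = length ns" using u lx by simp
  have "\<forall>i<length ns. 1 \<le> u!i \<and> u!i \<le> ns!i"
  proof (intro allI impI)
    fix i assume i: "i < length ns"
    have "1 \<le> x!i \<and> x!i \<le> (ns@[m])!i" using x i by (simp add: board_def)
    thus "1 \<le> u!i \<and> u!i \<le> ns!i" using u lu i by (simp add: nth_append)
  qed
  moreover have "1 \<le> j \<and> j \<le> m"
  proof -
    have B: "\<forall>i<length (ns@[m]). 1 \<le> x!i \<and> x!i \<le> (ns@[m])!i" using x unfolding board_def by blast
    have "1 \<le> x!length ns \<and> x!length ns \<le> (ns@[m])!length ns" using B[rule_format, of "length ns"] by simp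
    moreover have "(ns@[m])!length ns = m" by simp
    ultimately show ?thesis using u lu by (simp add: nth_append)
  qed
  ultimately show "x \<in> {u@[j] | u j. u \<in> board ns \<and> 1 \<le> j \<and> j \<le> m}" using u lu by (auto simp: board_def)
next
  fix x assume "x \<in> {u@[j] | u j. u \<in> board ns \<and> 1 \<le> j \<and> j \<le> m}"
  then obtain u j where "x = u@[j]" "u \<in> board ns" "1 \<le> j" "j \<le> m" by blast
  note h = this
  have "\<forall>i<length (ns@[m]). 1 \<le> x ! i \<and> x ! i \<le> (ns@[m]) ! i"
  proof (intro allI impI)
    fix i assume i: "i < length (ns@[m])"
    show "1 \<le> x ! i \<and> x ! i \<le> (ns@[m]) ! i"
    proof (cases "i < length ns")
      case True
      have "length u = length ns" using h(2) by (simp add: board_def)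
      thus ?thesis using True h(1,2) by (simp add: nth_append board_def)
    next
      case False
      hence "i = length ns" using i by simp
      moreover have "length u = length ns" using h(2) by (simp add: board_def)
      ultimately show ?thesis using h by (simp add: nth_append)
    qed
  qed
  moreover have "length x = length (ns@[m])" using h by (simp add: board_def)
  ultimately show "x \<in> board (ns@[m])" unfolding board_def mem_Collect_eq by (intro conjI)
qed



lemma adj_sym_gen:
  assumes "ab_adj a b d x y" shows "ab_adj a b d y x"
proof -
  let ?v = "map2 (-) y x" and ?w = "map2 (-) x y"
  have lv: "length ?w = length ?v" by simp
  have nw: "\<And>k. k < length ?v \<Longrightarrow> ?w!k = - (?v!k)" by simp
  have m: "ab_move a b d ?v" using assms by (simp only: ab_adj_def)
  hence ld: "length ?v = d" by (simp add: ab_move_def)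
  have s1: "{i. i < d \<and> ?w ! i = 0} = {i. i < d \<and> ?v ! i = 0}" using nw ld by auto
  have s2: "{i. i < d \<and> (?w ! i = a \<or> ?w ! i = - a)} = {i. i < d \<and> (?v ! i = a \<or> ?v ! i = - a)}"
    using nw ld by auto
  have s3: "{i. i < d \<and> (?w ! i = b \<or> ?w ! i = - b)} = {i. i < d \<and> (?v ! i = b \<or> ?v ! i = - b)}"
    using nw ld by auto
  have "ab_move a b d ?w" using m lv s1 s2 s3 unfolding ab_move_def by simp
  thus ?thesis by (simp only: ab_adj_def)
qed

lemma symp_adj: "symp (ab_adj a b d)"
  by (rule sympI) (rule adj_sym_gen)

lemma tour_len: "ab_tour a b ns c \<Longrightarrow> x \<in> set c \<Longrightarrow> length x = length ns"
  by (simp add: ab_tour_def board_def)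

locale stp =
  fixes a b :: int and ns :: "int list" and C :: "int list list" and m :: int
    and x1 y1 x1' y1' x2 y2 x2' y2' u1 v1 u1' v1' u2 v2 u2' v2' :: "int list"
  assumes ab: "0 < b" "b < a" and cop: "coprime a b" and mL: "a + b - 1 \<le> m"
    and tour: "ab_tour a b ns C"
    and eA1: "edge_in C x1 y1" "edge_in C x1' y1'" "shift b (length ns) x1 x1'" "shift b (length ns) y1 y1'"
    and eA2: "edge_in C x2 y2" "edge_in C x2' y2'" "shift b (length ns) x2 x2'" "shift b (length ns) y2 y2'"
    and eB1: "edge_in C u1 v1" "edge_in C u1' v1'" "shift a (length ns) u1 u1'" "shift a (length ns) v1 v1'"
    and eB2: "edge_in C u2 v2" "edge_in C u2' v2'" "shift a (length ns) u2 u2'" "shift a (length ns) v2 v2'"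
    and dist: "distinct [{x1,y1},{x1',y1'},{x2,y2},{x2',y2'},{u1,v1},{u1',v1'},{u2,v2},{u2',v2'}]"
begin

abbreviation "d \<equiv> length ns"
abbreviation "R \<equiv> ab_adj a b (Suc d)"
definition V :: "int set \<Rightarrow> int list set" where "V S = {u@[j] | u j. u \<in> board ns \<and> j \<in> S}"
definition LC :: "int \<Rightarrow> int list list" where "LC j = map (\<lambda>u. u@[j]) C"
definition hs :: "int list list \<Rightarrow> int \<Rightarrow> int list \<Rightarrow> int list \<Rightarrow> bool" where
  "hs Z j x y \<longleftrightarrow> edge_in Z (x@[j]) (y@[j])"
definition used :: "int list set set" where "used = {{x1,y1},{x1',y1'},{u1,v1},{u1',v1'}}"
definition Spare :: "int list list \<Rightarrow> int \<Rightarrow> bool" where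
  "Spare Z j \<longleftrightarrow> hs Z j x2 y2 \<and> hs Z j x2' y2' \<and> hs Z j u2 v2 \<and> hs Z j u2' v2'"

lemma symR: "symp R" by (rule symp_adj)

lemma cycC: "cyc (ab_adj a b d) C" using tour by (simp add: ab_tour_def cyc_def)

lemma cycLC: "cyc R (LC j)"
  unfolding LC_def using cyc_lay[OF ab cycC] tour_len[OF tour] by blast

lemma setLC: "set (LC j) = V {j}"
  using tour unfolding LC_def V_def ab_tour_def by auto

lemma hsLC: "edge_in C x y \<Longrightarrow> hs (LC j) j x y"
  unfolding hs_def LC_def by (rule edge_lay)

lemma V_disj: "j \<notin> S \<Longrightarrow> V S \<inter> V {j} = {}"
  unfolding V_def by auto

lemma V_ins: "V S \<union> V {j} = V (insert j S)"
  unfolding V_def by auto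

lemma ne_gen: "X \<notin> U \<Longrightarrow> Y \<in> U \<Longrightarrow> X \<noteq> Y" by blast

lemma ne:
  "{x1,y1} \<noteq> {x1',y1'}" "{x1,y1} \<noteq> {x2,y2}" "{x1,y1} \<noteq> {x2',y2'}" "{x1,y1} \<noteq> {u1,v1}"
  "{x1,y1} \<noteq> {u1',v1'}" "{x1,y1} \<noteq> {u2,v2}" "{x1,y1} \<noteq> {u2',v2'}"
  "{x1',y1'} \<noteq> {x2,y2}" "{x1',y1'} \<noteq> {x2',y2'}" "{x1',y1'} \<noteq> {u1,v1}"
  "{x1',y1'} \<noteq> {u1',v1'}" "{x1',y1'} \<noteq> {u2,v2}" "{x1',y1'} \<noteq> {u2',v2'}"
  "{x2,y2} \<noteq> {x2',y2'}" "{x2,y2} \<noteq> {u1,v1}" "{x2,y2} \<noteq> {u1',v1'}" "{x2,y2} \<noteq> {u2,v2}" "{x2,y2} \<noteq> {u2',v2'}"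
  "{x2',y2'} \<noteq> {u1,v1}" "{x2',y2'} \<noteq> {u1',v1'}" "{x2',y2'} \<noteq> {u2,v2}" "{x2',y2'} \<noteq> {u2',v2'}"
  "{u1,v1} \<noteq> {u1',v1'}" "{u1,v1} \<noteq> {u2,v2}" "{u1,v1} \<noteq> {u2',v2'}"
  "{u1',v1'} \<noteq> {u2,v2}" "{u1',v1'} \<noteq> {u2',v2'}" "{u2,v2} \<noteq> {u2',v2'}"
  using dist by (simp_all only: distinct.simps list.set insert_iff empty_iff simp_thms de_Morgan_disj)

lemmas ne' = ne[THEN not_sym]

lemma spare_notused:
  "{x2,y2} \<notin> used" "{x2',y2'} \<notin> used" "{u2,v2} \<notin> used" "{u2',v2'} \<notin> used"
  unfolding used_def by (simp_all only: insert_iff empty_iff ne ne' simp_thms)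

lemma used_in: "{x1,y1} \<in> used" "{x1',y1'} \<in> used" "{u1,v1} \<in> used" "{u1',v1'} \<in> used"
  unfolding used_def by (simp_all only: insert_iff simp_thms)

lemma keep:
  assumes "hs Z j x y" "\<forall>u v. edge_in Z u v \<longrightarrow> {u,v} \<noteq> {p@[j0],q@[j0]} \<longrightarrow> edge_in Z' u v"
    "j \<noteq> j0 \<or> {x,y} \<noteq> {p,q}"
  shows "hs Z' j x y"
proof -
  have h2: "{x@[j],y@[j]} \<noteq> {p@[j0],q@[j0]}" by (simp only: dbl_lay de_Morgan_conj) (rule assms(3))
  have h1: "edge_in Z (x@[j]) (y@[j])" using assms(1) by (simp only: hs_def)
  have "edge_in Z' (x@[j]) (y@[j])" by (rule assms(2)[rule_format, OF h1 h2])
  thus ?thesis by (simp only: hs_def)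
qed

lemma spare_keep:
  assumes "Spare Z j" "\<forall>u v. edge_in Z u v \<longrightarrow> {u,v} \<noteq> {p@[j0],q@[j0]} \<longrightarrow> edge_in Z' u v"
    "{p,q} \<in> used"
  shows "Spare Z' j"
proof -
  have S: "hs Z j x2 y2" "hs Z j x2' y2'" "hs Z j u2 v2" "hs Z j u2' v2'" using assms(1) by (simp_all only: Spare_def)
  have "hs Z' j x2 y2" "hs Z' j x2' y2'" "hs Z' j u2 v2" "hs Z' j u2' v2'"
    by (rule keep[OF S(1) assms(2) disjI2[OF ne_gen[OF spare_notused(1) assms(3)]]],
        rule keep[OF S(2) assms(2) disjI2[OF ne_gen[OF spare_notused(2) assms(3)]]],
        rule keep[OF S(3) assms(2) disjI2[OF ne_gen[OF spare_notused(3) assms(3)]]],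
        rule keep[OF S(4) assms(2) disjI2[OF ne_gen[OF spare_notused(4) assms(3)]]])
  thus ?thesis unfolding Spare_def by (intro conjI)
qed

lemma new_keep:
  assumes "edge_in C x y" "\<forall>u v. edge_in C u v \<longrightarrow> {u,v} \<noteq> {p,q} \<longrightarrow> hs Z' j u v" "{x,y} \<noteq> {p,q}"
  shows "hs Z' j x y" using assms(2)[rule_format, OF assms(1) assms(3)] .

lemma spare_new:
  assumes "\<forall>u v. edge_in C u v \<longrightarrow> {u,v} \<noteq> {p,q} \<longrightarrow> hs Z' j u v" "{p,q} \<in> used"
  shows "Spare Z' j"
proof -
  have "hs Z' j x2 y2" "hs Z' j x2' y2'" "hs Z' j u2 v2" "hs Z' j u2' v2'"
    by (rule new_keep[OF eA2(1) assms(1) ne_gen[OF spare_notused(1) assms(2)]],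
        rule new_keep[OF eA2(2) assms(1) ne_gen[OF spare_notused(2) assms(2)]],
        rule new_keep[OF eB2(1) assms(1) ne_gen[OF spare_notused(3) assms(2)]],
        rule new_keep[OF eB2(2) assms(1) ne_gen[OF spare_notused(4) assms(2)]])
  thus ?thesis unfolding Spare_def by (intro conjI)
qed

lemma add_layer:
  assumes Z: "cyc R Z" "set Z = V S" "j \<notin> S" "edge_in Z X Y" "edge_in C p q" "R X (p@[j])" "R Y (q@[j])"
  shows "\<exists>Z'. cyc R Z' \<and> set Z' = V (insert j S) \<and> (\<forall>u v. edge_in Z u v \<longrightarrow> {u,v} \<noteq> {X,Y} \<longrightarrow> edge_in Z' u v)
     \<and> (\<forall>u v. edge_in C u v \<longrightarrow> {u,v} \<noteq> {p,q} \<longrightarrow> hs Z' j u v)"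
proof -
  have disj: "set Z \<inter> set (LC j) = {}" using Z(2,3) setLC V_disj by simp
  have eL: "edge_in (LC j) (p@[j]) (q@[j])" using hsLC[OF Z(5)] by (simp add: hs_def)
  obtain e where e: "cyc R e" "set e = set Z \<union> set (LC j)"
     "\<forall>u v. edge_in Z u v \<longrightarrow> {u,v} \<noteq> {X,Y} \<longrightarrow> edge_in e u v"
     "\<forall>u v. edge_in (LC j) u v \<longrightarrow> {u,v} \<noteq> {p@[j],q@[j]} \<longrightarrow> edge_in e u v"
    using merge_cyc[OF Z(1) cycLC symR disj Z(4) eL Z(6,7)] by blast
  have "set e = V (insert j S)" using e(2) Z(2) setLC V_ins by simp
  moreover have "\<forall>u v. edge_in C u v \<longrightarrow> {u,v} \<noteq> {p,q} \<longrightarrow> hs e j u v"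
  proof (intro allI impI)
    fix u v assume uv: "edge_in C u v" "{u,v} \<noteq> {p,q}"
    have "edge_in (LC j) (u@[j]) (v@[j])" using hsLC[OF uv(1)] by (simp add: hs_def)
    note h1 = this
    have h2: "{u@[j],v@[j]} \<noteq> {p@[j],q@[j]}" using uv(2) by (simp only: dbl_lay simp_thms)
    show "hs e j u v" unfolding hs_def by (rule e(4)[rule_format, OF h1 h2])
  qed
  ultimately show ?thesis using e(1,3) by blast
qed

end



definition isgad :: "int list list \<Rightarrow> int \<Rightarrow> nat \<Rightarrow> int list \<Rightarrow> int list \<Rightarrow> int list \<Rightarrow> int list \<Rightarrow> bool" where
 "isgad c s d x y x' y' \<longleftrightarrow> edge_in c x y \<and> edge_in c x' y' \<and> shift s d x x' \<and> shift s d y y'"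

definition GOOD :: "int \<Rightarrow> int \<Rightarrow> int list \<Rightarrow> bool" where
 "GOOD a b ns \<longleftrightarrow> (\<exists>c x1 y1 x1' y1' x2 y2 x2' y2' u1 v1 u1' v1' u2 v2 u2' v2'. ab_tour a b ns c \<and>
    isgad c b (length ns) x1 y1 x1' y1' \<and> isgad c b (length ns) x2 y2 x2' y2' \<and>
    isgad c a (length ns) u1 v1 u1' v1' \<and> isgad c a (length ns) u2 v2 u2' v2' \<and>
    distinct [{x1,y1},{x1',y1'},{x2,y2},{x2',y2'},{u1,v1},{u1',v1'},{u2,v2},{u2',v2'}])"

context stp begin

definition xw :: "nat \<Rightarrow> int" where "xw k = (int (Suc k) * a) mod (a+b)"

abbreviation "nL \<equiv> nat (a + b - 1)"

lemma cop2: "coprime (a+b) a"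
proof -
  have "coprime a (a+b)" using cop by (simp add: coprime_iff_gcd_eq_1)
  thus ?thesis by (simp add: coprime_commute)
qed

lemma xw_bnd: "0 \<le> xw k" "xw k < a + b"
  unfolding xw_def using ab by simp_all

lemma xw_nz: assumes "k < nL" shows "xw k \<noteq> 0"
proof
  assume "xw k = 0"
  hence "(a+b) dvd int (Suc k) * a" unfolding xw_def by (simp add: dvd_eq_mod_eq_0)
  hence dv: "(a+b) dvd int (Suc k)" using coprime_dvd_mult_left_iff[OF cop2] by simp
  have "a + b \<le> int (Suc k)" using zdvd_imp_le[OF dv] by simp
  moreover have "int (Suc k) \<le> a + b - 1" using assms ab by linarith
  ultimately show False by simp
qed

lemma xw_range: "k < nL \<Longrightarrow> 1 \<le> xw k \<and> xw k \<le> a + b - 1"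
  using xw_nz xw_bnd[of k] by force

lemma xw_inj: assumes "k < nL" "k' < nL" "xw k = xw k'" shows "k = k'"
proof (rule ccontr)
  assume ne: "k \<noteq> k'"
  have "(a+b) dvd int (Suc k) * a - int (Suc k') * a" using assms(3) unfolding xw_def by (simp add: mod_eq_dvd_iff)
  moreover have "int (Suc k) * a - int (Suc k') * a = (int k - int k') * a" by (simp add: algebra_simps)
  ultimately have "(a+b) dvd (int k - int k') * a" by simp
  hence dv: "(a+b) dvd (int k - int k')" using coprime_dvd_mult_left_iff[OF cop2] by simp
  have "int k - int k' \<noteq> 0" using ne by simp
  from dvd_imp_le_int[OF this dv] have "\<bar>a+b\<bar> \<le> \<bar>int k - int k'\<bar>" .
  moreover have "\<bar>int k - int k'\<bar> < a + b" using assms(1,2) ab by linarith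
  ultimately show False using ab by simp
qed

lemma xw0: "xw 0 = a" unfolding xw_def using ab by simp

lemma xw_step: "xw (Suc k) = (if xw k + a < a + b then xw k + a else xw k - b)"
proof -
  have "xw (Suc k) = (int (Suc k) * a + a) mod (a+b)" unfolding xw_def by (simp add: algebra_simps)
  also have "\<dots> = (xw k + a) mod (a+b)" unfolding xw_def by (simp add: mod_add_left_eq)
  finally have e: "xw (Suc k) = (xw k + a) mod (a+b)" .
  show ?thesis
  proof (cases "xw k + a < a + b")
    case True thus ?thesis using e xw_bnd[of k] ab by simp
  next
    case False
    hence "(xw k + a) mod (a+b) = (xw k + a - (a+b)) mod (a+b)" using ab by (simp add: mod_pos_geq)
    also have "\<dots> = xw k - b" using xw_bnd[of k] ab False by simp
    finally show ?thesis using e False by simp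
  qed
qed

lemma xw_img: "xw ` {..<nL} = {1..a+b-1}"
proof (rule card_subset_eq)
  show "finite {1..a+b-1}" by simp
  show "xw ` {..<nL} \<subseteq> {1..a+b-1}" using xw_range by auto
  have "inj_on xw {..<nL}" using xw_inj by (auto simp: inj_on_def)
  hence "card (xw ` {..<nL}) = nL" by (simp add: card_image)
  thus "card (xw ` {..<nL}) = card {1..a+b-1}" by simp
qed

definition W :: "nat \<Rightarrow> int list list \<Rightarrow> bool" where
  "W i Z \<longleftrightarrow> cyc R Z \<and> set Z = V (xw ` {..i}) \<and> (\<forall>k\<le>i. Spare Z (xw k))
     \<and> (\<forall>k\<le>i. b \<le> xw k \<longrightarrow> hs Z (xw k) x1 y1) \<and> hs Z (xw i) x1 y1 \<and> hs Z (xw i) u1' v1'"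

lemma spareLC: "Spare (LC j) j"
  unfolding Spare_def using hsLC eA2(1,2) eB2(1,2) by blast

lemma W0: "W 0 (LC a)"
proof -
  have "xw ` {..0} = {a}" using xw0 by simp
  thus ?thesis unfolding W_def using cycLC setLC spareLC hsLC[OF eA1(1)] hsLC[OF eB1(2)] xw0 by simp
qed

lemma Wstep:
  assumes i: "Suc i < nL" and w: "W i Z"
  shows "\<exists>Z'. W (Suc i) Z'"
proof -
  let ?j0 = "xw i" and ?j1 = "xw (Suc i)"
  have cZ: "cyc R Z" and sZ: "set Z = V (xw ` {..i})" and spZ: "\<forall>k\<le>i. Spare Z (xw k)"
    and eZ: "\<forall>k\<le>i. b \<le> xw k \<longrightarrow> hs Z (xw k) x1 y1" and h1: "hs Z ?j0 x1 y1" and h2: "hs Z ?j0 u1' v1'"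
    using w unfolding W_def by blast+
  have nin: "?j1 \<notin> xw ` {..i}"
  proof
    assume "?j1 \<in> xw ` {..i}"
    then obtain k where "k \<le> i" "xw (Suc i) = xw k" by blast
    thus False using xw_inj[of "Suc i" k] i by simp
  qed
  have img: "insert ?j1 (xw ` {..i}) = xw ` {..Suc i}" by (simp add: atMost_Suc)
  show ?thesis
  proof (cases "?j0 + a < a + b")
    case True
    hence j1: "?j1 = ?j0 + a" using xw_step by simp
    have RX: "R (x1@[?j0]) (x1'@[?j1])" using adj_cross[OF ab eA1(3), of a ?j0] j1 by simp
    have RY: "R (y1@[?j0]) (y1'@[?j1])" using adj_cross[OF ab eA1(4), of a ?j0] j1 by simp
    have eX: "edge_in Z (x1@[?j0]) (y1@[?j0])" using h1 by (simp only: hs_def)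
    obtain Z' where Z': "cyc R Z'" "set Z' = V (insert ?j1 (xw ` {..i}))"
      "\<forall>u v. edge_in Z u v \<longrightarrow> {u,v} \<noteq> {x1@[?j0],y1@[?j0]} \<longrightarrow> edge_in Z' u v"
      "\<forall>u v. edge_in C u v \<longrightarrow> {u,v} \<noteq> {x1',y1'} \<longrightarrow> hs Z' ?j1 u v"
      using add_layer[OF cZ sZ nin eX eA1(2) RX RY] by blast
    have "\<forall>k\<le>Suc i. Spare Z' (xw k)"
    proof (intro allI impI)
      fix k assume "k \<le> Suc i"
      thus "Spare Z' (xw k)"
      proof (cases "k \<le> i")
        case True thus ?thesis using spare_keep[OF _ Z'(3) used_in(1)] spZ by blast
      next
        case False hence "k = Suc i" using \<open>k \<le> Suc i\<close> by simp
        thus ?thesis using spare_new[OF Z'(4) used_in(2)] by simp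
      qed
    qed
    moreover have new1: "hs Z' ?j1 x1 y1" by (rule new_keep[OF eA1(1) Z'(4) ne(1)])
    moreover have "\<forall>k\<le>Suc i. b \<le> xw k \<longrightarrow> hs Z' (xw k) x1 y1"
    proof (intro allI impI)
      fix k assume k: "k \<le> Suc i" "b \<le> xw k"
      show "hs Z' (xw k) x1 y1"
      proof (cases "k \<le> i")
        case True
        have "xw k \<noteq> ?j0" using True k(2) \<open>?j0 + a < a + b\<close> by linarith
        thus ?thesis using keep[OF _ Z'(3)] eZ True k(2) by blast
      next
        case False hence "k = Suc i" using k by simp
        thus ?thesis using new1 by simp
      qed
    qed
    moreover have "hs Z' ?j1 u1' v1'" by (rule new_keep[OF eB1(2) Z'(4) ne(11)[THEN not_sym]])
    ultimately have "W (Suc i) Z'" unfolding W_def using Z'(1,2) img by simp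
    thus ?thesis by blast
  next
    case False
    hence j1: "?j1 = ?j0 - b" using xw_step by simp
    have "R (u1@[?j1]) (u1'@[?j1 + b])" using adj_cross[OF ab eB1(3), of b ?j1] by simp
    hence RX: "R (u1'@[?j0]) (u1@[?j1])" using j1 adj_sym_gen by simp
    have "R (v1@[?j1]) (v1'@[?j1 + b])" using adj_cross[OF ab eB1(4), of b ?j1] by simp
    hence RY: "R (v1'@[?j0]) (v1@[?j1])" using j1 adj_sym_gen by simp
    have eX: "edge_in Z (u1'@[?j0]) (v1'@[?j0])" using h2 by (simp only: hs_def)
    obtain Z' where Z': "cyc R Z'" "set Z' = V (insert ?j1 (xw ` {..i}))"
      "\<forall>u v. edge_in Z u v \<longrightarrow> {u,v} \<noteq> {u1'@[?j0],v1'@[?j0]} \<longrightarrow> edge_in Z' u v"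
      "\<forall>u v. edge_in C u v \<longrightarrow> {u,v} \<noteq> {u1,v1} \<longrightarrow> hs Z' ?j1 u v"
      using add_layer[OF cZ sZ nin eX eB1(1) RX RY] by blast
    have "\<forall>k\<le>Suc i. Spare Z' (xw k)"
    proof (intro allI impI)
      fix k assume "k \<le> Suc i"
      thus "Spare Z' (xw k)"
      proof (cases "k \<le> i")
        case True thus ?thesis using spare_keep[OF _ Z'(3) used_in(4)] spZ by blast
      next
        case False hence "k = Suc i" using \<open>k \<le> Suc i\<close> by simp
        thus ?thesis using spare_new[OF Z'(4) used_in(3)] by simp
      qed
    qed
    moreover have new1: "hs Z' ?j1 x1 y1" by (rule new_keep[OF eA1(1) Z'(4) ne(4)])
    moreover have "\<forall>k\<le>Suc i. b \<le> xw k \<longrightarrow> hs Z' (xw k) x1 y1"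
    proof (intro allI impI)
      fix k assume k: "k \<le> Suc i" "b \<le> xw k"
      show "hs Z' (xw k) x1 y1"
      proof (cases "k \<le> i")
        case True
        have "hs Z (xw k) x1 y1" using eZ True k(2) by blast
        thus ?thesis using keep[OF _ Z'(3) disjI2[OF ne(5)]] by blast
      next
        case False hence "k = Suc i" using k by simp
        thus ?thesis using new1 by simp
      qed
    qed
    moreover have "hs Z' ?j1 u1' v1'" by (rule new_keep[OF eB1(2) Z'(4) ne(23)[THEN not_sym]])
    ultimately have "W (Suc i) Z'" unfolding W_def using Z'(1,2) img by simp
    thus ?thesis by blast
  qed
qed

lemma W_all: "i < nL \<Longrightarrow> \<exists>Z. W i Z"
proof (induction i)
  case 0 thus ?case using W0 by blast
next
  case (Suc i) thus ?case using Wstep by (meson Suc_lessD)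
qed

definition H :: "int \<Rightarrow> int list list \<Rightarrow> bool" where
  "H M Z \<longleftrightarrow> cyc R Z \<and> set Z = V {1..M} \<and> (\<forall>j. 1 \<le> j \<and> j \<le> M \<longrightarrow> Spare Z j)
     \<and> (\<forall>j. M - a < j \<and> j \<le> M \<longrightarrow> hs Z j x1 y1)"

lemma H_L: "\<exists>Z. H (a+b-1) Z"
proof -
  have "nL - 1 < nL" using ab by simp
  then obtain Z where w: "W (nL - 1) Z" using W_all by blast
  have sets: "{..nL - 1} = {..<nL}" using ab by auto
  hence img: "xw ` {..nL - 1} = {1..a+b-1}" using xw_img by simp
  have cZ: "cyc R Z" and sZ: "set Z = V (xw ` {..nL-1})" and spZ: "\<forall>k\<le>nL-1. Spare Z (xw k)"
    and eZ: "\<forall>k\<le>nL-1. b \<le> xw k \<longrightarrow> hs Z (xw k) x1 y1"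
    using w unfolding W_def by blast+
  have "\<forall>j. 1 \<le> j \<and> j \<le> a+b-1 \<longrightarrow> Spare Z j"
  proof (intro allI impI)
    fix j assume "1 \<le> j \<and> j \<le> a+b-1"
    hence "j \<in> xw ` {..nL - 1}" using img by simp
    then obtain k where "k \<le> nL - 1" "j = xw k" by blast
    thus "Spare Z j" using spZ by blast
  qed
  moreover have "\<forall>j. a+b-1 - a < j \<and> j \<le> a+b-1 \<longrightarrow> hs Z j x1 y1"
  proof (intro allI impI)
    fix j assume j: "a+b-1 - a < j \<and> j \<le> a+b-1"
    hence "j \<in> xw ` {..nL - 1}" using img ab by simp
    then obtain k where "k \<le> nL - 1" "j = xw k" by blast
    thus "hs Z j x1 y1" using eZ j by simp
  qed
  ultimately have "H (a+b-1) Z" unfolding H_def using cZ sZ img by simp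
  thus ?thesis by blast
qed

lemma H_step:
  assumes M: "a + b - 1 \<le> M" and h: "H M Z"
  shows "\<exists>Z'. H (M+1) Z'"
proof -
  let ?j0 = "M + 1 - a" and ?j1 = "M + 1"
  have cZ: "cyc R Z" and sZ: "set Z = V {1..M}" and spZ: "\<forall>j. 1 \<le> j \<and> j \<le> M \<longrightarrow> Spare Z j"
    and eZ: "\<forall>j. M - a < j \<and> j \<le> M \<longrightarrow> hs Z j x1 y1"
    using h unfolding H_def by blast+
  have nin: "?j1 \<notin> {1..M}" by simp
  have h1: "hs Z ?j0 x1 y1" using eZ ab by simp
  have j1: "?j1 = ?j0 + a" by simp
  have RX: "R (x1@[?j0]) (x1'@[?j1])" using adj_cross[OF ab eA1(3), of a ?j0] j1 by simp
  have RY: "R (y1@[?j0]) (y1'@[?j1])" using adj_cross[OF ab eA1(4), of a ?j0] j1 by simp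
  have eX: "edge_in Z (x1@[?j0]) (y1@[?j0])" using h1 by (simp only: hs_def)
  obtain Z' where Z': "cyc R Z'" "set Z' = V (insert ?j1 {1..M})"
    "\<forall>u v. edge_in Z u v \<longrightarrow> {u,v} \<noteq> {x1@[?j0],y1@[?j0]} \<longrightarrow> edge_in Z' u v"
    "\<forall>u v. edge_in C u v \<longrightarrow> {u,v} \<noteq> {x1',y1'} \<longrightarrow> hs Z' ?j1 u v"
    using add_layer[OF cZ sZ nin eX eA1(2) RX RY] by blast
  have ins: "insert ?j1 {1..M} = {1..M+1}" using M ab by auto
  have "\<forall>j. 1 \<le> j \<and> j \<le> M+1 \<longrightarrow> Spare Z' j"
  proof (intro allI impI)
    fix j assume j: "1 \<le> j \<and> j \<le> M+1"
    show "Spare Z' j"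
    proof (cases "j \<le> M")
      case True thus ?thesis using spare_keep[OF _ Z'(3) used_in(1)] spZ j by blast
    next
      case False hence "j = M+1" using j by simp
      thus ?thesis using spare_new[OF Z'(4) used_in(2)] by simp
    qed
  qed
  moreover have new1: "hs Z' ?j1 x1 y1" by (rule new_keep[OF eA1(1) Z'(4) ne(1)])
  moreover have "\<forall>j. M + 1 - a < j \<and> j \<le> M+1 \<longrightarrow> hs Z' j x1 y1"
  proof (intro allI impI)
    fix j assume j: "M + 1 - a < j \<and> j \<le> M+1"
    show "hs Z' j x1 y1"
    proof (cases "j \<le> M")
      case True
      have "hs Z j x1 y1" using eZ True j by simp
      moreover have "j \<noteq> ?j0" using j by simp
      ultimately show ?thesis using keep[OF _ Z'(3)] by blast
    next
      case False hence "j = M+1" using j by simp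
      thus ?thesis using new1 by simp
    qed
  qed
  ultimately have "H (M+1) Z'" unfolding H_def using Z'(1,2) ins by simp
  thus ?thesis by blast
qed

lemma H_all: "\<exists>Z. H (a + b - 1 + int n) Z"
proof (induction n)
  case 0 thus ?case using H_L by simp
next
  case (Suc n)
  then obtain Z where "H (a + b - 1 + int n) Z" by blast
  from H_step[OF _ this] show ?case by (simp add: add.assoc)
qed

lemma Hm: "\<exists>Z. H m Z"
proof -
  have "m = a + b - 1 + int (nat (m - (a + b - 1)))" using mL by simp
  thus ?thesis using H_all by metis
qed

lemma result: "GOOD a b (ns@[m])"
proof -
  obtain Z where h: "H m Z" using Hm by blast
  have cZ: "cyc R Z" and sZ: "set Z = V {1..m}" and spZ: "\<forall>j. 1 \<le> j \<and> j \<le> m \<longrightarrow> Spare Z j"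
    using h unfolding H_def by blast+
  have m2: "2 \<le> m" using mL ab by simp
  have S1: "Spare Z 1" using spZ m2 by simp
  have S2: "Spare Z 2" using spZ m2 by simp
  have bd: "set Z = board (ns@[m])" using sZ unfolding V_def board_snoc by auto
  have tour': "ab_tour a b (ns@[m]) Z" using cZ bd unfolding ab_tour_def cyc_def by simp
  have l: "length (ns@[m]) = Suc d" by simp
  have g: "\<And>j. Spare Z j \<Longrightarrow> isgad Z b (length (ns@[m])) (x2@[j]) (y2@[j]) (x2'@[j]) (y2'@[j])
      \<and> isgad Z a (length (ns@[m])) (u2@[j]) (v2@[j]) (u2'@[j]) (v2'@[j])"
    unfolding isgad_def Spare_def hs_def l using shift_lay eA2(3,4) eB2(3,4) by blast
  have n12: "(1::int) \<noteq> 2" "(2::int) \<noteq> 1" by simp_all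
  have D: "distinct [{x2@[1],y2@[1]},{x2'@[1],y2'@[1]},{x2@[2],y2@[2]},{x2'@[2],y2'@[2]},
                     {u2@[1],v2@[1]},{u2'@[1],v2'@[1]},{u2@[2],v2@[2]},{u2'@[2],v2'@[2]}]"
    by (simp only: distinct.simps list.set insert_iff empty_iff simp_thms de_Morgan_disj dbl_lay
        n12 ne(14,17,18,21,22,28) de_Morgan_conj)
  show ?thesis unfolding GOOD_def
    using tour' g[OF S1] g[OF S2] D by blast
qed

end



lemma good_step:
  assumes ab: "0 < b" "b < a" and cop: "coprime a b" and mL: "a + b - 1 \<le> m" and g: "GOOD a b ns"
  shows "GOOD a b (ns@[m])"
proof -
  obtain c x1 y1 x1' y1' x2 y2 x2' y2' u1 v1 u1' v1' u2 v2 u2' v2' where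
    h: "ab_tour a b ns c" "isgad c b (length ns) x1 y1 x1' y1'" "isgad c b (length ns) x2 y2 x2' y2'"
    "isgad c a (length ns) u1 v1 u1' v1'" "isgad c a (length ns) u2 v2 u2' v2'"
    "distinct [{x1,y1},{x1',y1'},{x2,y2},{x2',y2'},{u1,v1},{u1',v1'},{u2,v2},{u2',v2'}]"
    using g unfolding GOOD_def by blast
  interpret stp a b ns c m x1 y1 x1' y1' x2 y2 x2' y2' u1 v1 u1' v1' u2 v2 u2' v2'
    using ab cop mL h unfolding isgad_def by unfold_locales blast+
  show ?thesis by (rule result)
qed

lemma adj2_iff:
  assumes ab: "0 < b" "b < a" and l: "length x = 2" "length y = 2"
  shows "ab_adj a b 2 x y \<longleftrightarrow> (\<bar>y!0 - x!0\<bar> = a \<and> \<bar>y!1 - x!1\<bar> = b) \<or> (\<bar>y!0 - x!0\<bar> = b \<and> \<bar>y!1 - x!1\<bar> = a)"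
proof
  assume "ab_adj a b 2 x y"
  then obtain i j where ij: "i<2" "j<2" "i \<noteq> j" "\<bar>y!i - x!i\<bar> = a" "\<bar>y!j - x!j\<bar> = b"
    unfolding adj_iff[OF ab l] by blast
  have "(i = 0 \<and> j = 1) \<or> (i = 1 \<and> j = 0)" using ij(1-3) by auto
  thus "(\<bar>y!0 - x!0\<bar> = a \<and> \<bar>y!1 - x!1\<bar> = b) \<or> (\<bar>y!0 - x!0\<bar> = b \<and> \<bar>y!1 - x!1\<bar> = a)"
    using ij(4,5) by auto
next
  assume h: "(\<bar>y!0 - x!0\<bar> = a \<and> \<bar>y!1 - x!1\<bar> = b) \<or> (\<bar>y!0 - x!0\<bar> = b \<and> \<bar>y!1 - x!1\<bar> = a)"
  have r: "\<And>i k. i < 2 \<Longrightarrow> k < 2 \<Longrightarrow> i \<noteq> k \<Longrightarrow> \<forall>l<2. l \<noteq> i \<longrightarrow> l \<noteq> k \<longrightarrow> y!l = x!l" by auto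
  show "ab_adj a b 2 x y"
  proof (cases "\<bar>y!0 - x!0\<bar> = a \<and> \<bar>y!1 - x!1\<bar> = b")
    case True
    thus ?thesis using adj_intro[OF ab l, of 0 1] r[of 0 1] by simp
  next
    case False
    hence "\<bar>y!1 - x!1\<bar> = a \<and> \<bar>y!0 - x!0\<bar> = b" using h by blast
    thus ?thesis using adj_intro[OF ab l, of 1 0] r[of 1 0] by simp
  qed
qed

lemma board2: "x \<in> board [n1,n2] \<longleftrightarrow> (\<exists>p q. x = [p,q] \<and> 1 \<le> p \<and> p \<le> n1 \<and> 1 \<le> q \<and> q \<le> n2)"
proof
  assume "x \<in> board [n1,n2]"
  hence l: "length x = 2" and b: "\<forall>i<2. 1 \<le> x!i \<and> x!i \<le> [n1,n2]!i" by (simp_all add: board_def)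
  have "x = [x!0, x!1]" using l by (cases x; cases "tl x"; simp)
  moreover have "1 \<le> x!0 \<and> x!0 \<le> n1" using b[rule_format, of 0] by simp
  moreover have "1 \<le> x!1 \<and> x!1 \<le> n2" using b[rule_format, of 1] by simp
  ultimately show "\<exists>p q. x = [p,q] \<and> 1 \<le> p \<and> p \<le> n1 \<and> 1 \<le> q \<and> q \<le> n2" by blast
next
  assume "\<exists>p q. x = [p,q] \<and> 1 \<le> p \<and> p \<le> n1 \<and> 1 \<le> q \<and> q \<le> n2"
  then obtain p q where "x = [p,q]" "1 \<le> p" "p \<le> n1" "1 \<le> q" "q \<le> n2" by blast
  thus "x \<in> board [n1,n2]" by (auto simp: board_def less_Suc_eq)
qed

lemma nbrs:
  assumes c: "cyc R c" and z: "z \<in> set c"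
  shows "\<exists>p q. p \<noteq> q \<and> p \<in> set c \<and> q \<in> set c \<and> R z p \<and> R q z \<and> edge_in c z p \<and> edge_in c z q"
proof -
  let ?L = "length c"
  have L3: "3 \<le> ?L" and dc: "distinct c" and adj: "\<forall>i<?L. R (c!i) (c!((i+1) mod ?L))"
    using c by (simp_all add: cyc_def)
  obtain i where i: "i < ?L" "c!i = z" using z by (metis in_set_conv_nth)
  define ip where "ip = (i+1) mod ?L"
  define iq where "iq = (if i = 0 then ?L - 1 else i - 1)"
  have ipl: "ip < ?L" using L3 unfolding ip_def by (meson mod_less_divisor less_le_trans zero_less_numeral)
  have iql: "iq < ?L" using L3 i unfolding iq_def by auto
  have iqn: "(iq + 1) mod ?L = i" using L3 i unfolding iq_def by auto
  have ne: "ip \<noteq> iq"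
  proof
    assume e: "ip = iq"
    show False
    proof (cases "i + 1 < ?L")
      case True hence "ip = i + 1" unfolding ip_def by simp
      thus False using e L3 unfolding iq_def by (auto split: if_splits)
    next
      case False hence "i + 1 = ?L" using i by simp
      hence "ip = 0" unfolding ip_def by simp
      thus False using e L3 \<open>i + 1 = ?L\<close> unfolding iq_def by (auto split: if_splits)
    qed
  qed
  have "c!ip \<noteq> c!iq" using ne dc ipl iql by (simp add: nth_eq_iff_index_eq)
  moreover have "R z (c!ip)" using adj i unfolding ip_def by auto
  moreover have "R (c!iq) z" using adj[rule_format, OF iql] iqn i by simp
  moreover have "edge_in c z (c!ip)" unfolding edge_in_def using i ip_def by blast
  moreover have "edge_in c z (c!iq)" unfolding edge_in_def using iql iqn i by metis
  moreover have "c!ip \<in> set c" "c!iq \<in> set c" using ipl iql by simp_all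
  ultimately show ?thesis by blast
qed

lemma tour2_cop:
  assumes ab: "0 < b" "b < a" and t: "ab_tour a b [n1,n2] c" and n: "2 \<le> n1" "1 \<le> n2"
  shows "coprime a b"
proof -
  let ?g = "gcd a b" and ?L = "length c"
  have c: "cyc (ab_adj a b 2) c" "set c = board [n1,n2]" using t by (simp_all add: ab_tour_def cyc_def numeral_2_eq_2)
  have len: "\<And>x. x \<in> set c \<Longrightarrow> length x = 2" using c(2) by (simp add: board_def)
  have step: "\<And>i. Suc i < ?L \<Longrightarrow> ?g dvd (c!Suc i!0 - c!i!0)"
  proof -
    fix i assume i: "Suc i < ?L"
    have A: "\<forall>i<?L. ab_adj a b 2 (c!i) (c!((i+1) mod ?L))" using c(1) unfolding cyc_def by (elim conjE)
    have "(i+1) mod ?L = Suc i" using i by simp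
    hence "ab_adj a b 2 (c!i) (c!Suc i)" using A[rule_format, of i] i by simp
    moreover have "length (c!i) = 2" "length (c!Suc i) = 2" using len i by simp_all
    ultimately have "\<bar>c!Suc i!0 - c!i!0\<bar> = a \<or> \<bar>c!Suc i!0 - c!i!0\<bar> = b" using adj2_iff[OF ab] by blast
    thus "?g dvd (c!Suc i!0 - c!i!0)" by (metis dvd_abs_iff gcd_dvd1 gcd_dvd2)
  qed
  have all: "\<And>i. i < ?L \<Longrightarrow> ?g dvd (c!i!0 - c!0!0)"
  proof -
    fix i show "i < ?L \<Longrightarrow> ?g dvd (c!i!0 - c!0!0)"
    proof (induction i)
      case 0 thus ?case by simp
    next
      case (Suc i)
      hence "?g dvd (c!i!0 - c!0!0)" "?g dvd (c!Suc i!0 - c!i!0)" using step by simp_all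
      hence "?g dvd ((c!Suc i!0 - c!i!0) + (c!i!0 - c!0!0))" by (rule dvd_add[rotated])
      thus ?case by simp
    qed
  qed
  have "[1,1] \<in> set c" "[2,1] \<in> set c" using c(2) n by (simp_all add: board2)
  then obtain i1 i2 where "i1 < ?L" "c!i1 = [1,1]" "i2 < ?L" "c!i2 = [2,1]" by (metis in_set_conv_nth)
  hence "?g dvd (1 - c!0!0)" "?g dvd (2 - c!0!0)" using all by force+
  hence "?g dvd ((2 - c!0!0) - (1 - c!0!0))" by (rule dvd_diff[rotated])
  hence "?g dvd 1" by simp
  thus ?thesis by (simp add: coprime_iff_gcd_eq_1)
qed



locale corner =
  fixes a b n1 n2 :: int and c :: "int list list" and cx sx cy sy :: int
  assumes ab: "0 < b" "b < a" and n: "2*a+1 \<le> n1" "2*a+1 \<le> n2" and t: "ab_tour a b [n1,n2] c"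
    and sx: "(sx = 1 \<and> cx = 1) \<or> (sx = -1 \<and> cx = n1)"
    and sy: "(sy = 1 \<and> cy = 1) \<or> (sy = -1 \<and> cy = n2)"
begin

definition P :: "int \<Rightarrow> int \<Rightarrow> int list" where "P u v = [cx + sx*u, cy + sy*v]"

lemma P_board: "P u v \<in> board [n1,n2] \<longleftrightarrow> 0 \<le> u \<and> u \<le> n1 - 1 \<and> 0 \<le> v \<and> v \<le> n2 - 1"
  unfolding P_def board2 using sx sy by auto

lemma P_surj: assumes "w \<in> board [n1,n2]" shows "\<exists>u v. w = P u v"
proof -
  obtain p q where w: "w = [p,q]" using assms board2 by blast
  have "p = cx + sx * (sx * (p - cx))" "q = cy + sy * (sy * (q - cy))" using sx sy by auto
  thus ?thesis unfolding P_def w by blast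
qed

lemma P_adj: "ab_adj a b 2 (P u v) (P u' v') \<longleftrightarrow> (\<bar>u'-u\<bar> = a \<and> \<bar>v'-v\<bar> = b) \<or> (\<bar>u'-u\<bar> = b \<and> \<bar>v'-v\<bar> = a)"
proof -
  have "\<bar>(cx + sx*u') - (cx + sx*u)\<bar> = \<bar>u'-u\<bar>" "\<bar>(cy + sy*v') - (cy + sy*v)\<bar> = \<bar>v'-v\<bar>"
    using sx sy by (auto simp: abs_if algebra_simps)
  thus ?thesis unfolding P_def using adj2_iff[OF ab, of "[cx + sx*u, cy + sy*v]" "[cx + sx*u', cy + sy*v']"] by simp
qed

lemma P_shift: "\<bar>u'-u\<bar> = s \<Longrightarrow> shift s 2 (P u v) (P u' v)"
proof -
  assume h: "\<bar>u'-u\<bar> = s"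
  have "\<bar>(cx + sx*u') - (cx + sx*u)\<bar> = \<bar>u'-u\<bar>" using sx by (auto simp: abs_if algebra_simps)
  hence "\<bar>P u' v!0 - P u v!0\<bar> = s" using h unfolding P_def by simp
  moreover have "\<forall>k<2. k \<noteq> 0 \<longrightarrow> P u' v!k = P u v!k" unfolding P_def by (auto simp: less_Suc_eq)
  ultimately have "\<exists>i<2. \<bar>P u' v!i - P u v!i\<bar> = s \<and> (\<forall>k<2. k \<noteq> i \<longrightarrow> P u' v!k = P u v!k)"
    by (intro exI[of _ 0]) simp
  moreover have "length (P u v) = 2" "length (P u' v) = 2" unfolding P_def by simp_all
  ultimately show ?thesis unfolding shift_def by blast
qed

lemma cycc: "cyc (ab_adj a b 2) c" and setc: "set c = board [n1,n2]"
  using t by (simp_all add: ab_tour_def cyc_def numeral_2_eq_2)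

definition rel :: "int \<Rightarrow> int \<Rightarrow> int \<Rightarrow> int \<Rightarrow> bool" where
  "rel u0 v0 u v \<longleftrightarrow> (\<bar>u-u0\<bar> = a \<and> \<bar>v-v0\<bar> = b) \<or> (\<bar>u-u0\<bar> = b \<and> \<bar>v-v0\<bar> = a)"

lemma nb:
  assumes "P u0 v0 \<in> board [n1,n2]"
  shows "\<exists>u v u' v'. (u \<noteq> u' \<or> v \<noteq> v') \<and> edge_in c (P u0 v0) (P u v) \<and> edge_in c (P u0 v0) (P u' v')
     \<and> 0 \<le> u \<and> 0 \<le> v \<and> 0 \<le> u' \<and> 0 \<le> v' \<and> rel u0 v0 u v \<and> rel u0 v0 u' v'"
proof -
  obtain p q where pq: "p \<noteq> q" "p \<in> set c" "q \<in> set c" "ab_adj a b 2 (P u0 v0) p" "ab_adj a b 2 q (P u0 v0)"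
    "edge_in c (P u0 v0) p" "edge_in c (P u0 v0) q"
    using nbrs[OF cycc] assms setc by metis
  obtain u v where p: "p = P u v" using P_surj pq(2) setc by blast
  obtain u' v' where q: "q = P u' v'" using P_surj pq(3) setc by blast
  have "ab_adj a b 2 (P u0 v0) q" using pq(5) adj_sym_gen by blast
  hence r2: "rel u0 v0 u' v'" using q P_adj unfolding rel_def by simp
  have r1: "rel u0 v0 u v" using pq(4) p P_adj unfolding rel_def by simp
  have b1: "0 \<le> u" "0 \<le> v" using pq(2) p setc P_board by simp_all
  have b2: "0 \<le> u'" "0 \<le> v'" using pq(3) q setc P_board by simp_all
  have "u \<noteq> u' \<or> v \<noteq> v'" using pq(1) p q by auto
  thus ?thesis using r1 r2 b1 b2 pq(6,7) p q by blast
qed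

lemma inb: "0 \<le> u \<Longrightarrow> u \<le> 2*a \<Longrightarrow> 0 \<le> v \<Longrightarrow> v \<le> 2*a \<Longrightarrow> P u v \<in> board [n1,n2]"
  using P_board n by simp

lemma corner_edges: "edge_in c (P 0 0) (P a b) \<and> edge_in c (P 0 0) (P b a)"
proof -
  have "P 0 0 \<in> board [n1,n2]" using inb[of 0 0] ab by simp
  then obtain u v u' v' where h: "u \<noteq> u' \<or> v \<noteq> v'" "edge_in c (P 0 0) (P u v)" "edge_in c (P 0 0) (P u' v')"
     "0 \<le> u" "0 \<le> v" "0 \<le> u'" "0 \<le> v'" "rel 0 0 u v" "rel 0 0 u' v'"
    using nb by blast
  have c1: "(u = a \<and> v = b) \<or> (u = b \<and> v = a)" using h(4,5,8) unfolding rel_def by auto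
  have c2: "(u' = a \<and> v' = b) \<or> (u' = b \<and> v' = a)" using h(6,7,9) unfolding rel_def by auto
  show ?thesis using c1 c2 h(1,2,3) by auto
qed

lemma gad_b: "\<exists>u1 v1 u2 v2. isgad c b 2 (P 0 0) (P u1 v1) (P b 0) (P u2 v2) \<and> 1 \<le> v1 \<and> v1 \<le> a \<and> 1 \<le> v2 \<and> v2 \<le> a"
proof -
  have "P b 0 \<in> board [n1,n2]" using inb[of b 0] ab by simp
  then obtain u v u' v' where h: "edge_in c (P b 0) (P u v)" "0 \<le> u" "0 \<le> v" "rel b 0 u v"
    using nb by blast
  have cs: "(u = a + b \<and> v = b) \<or> (u = 2*b \<and> v = a) \<or> (u = 0 \<and> v = a)"
    using h(2,3,4) ab unfolding rel_def by auto
  have E: "edge_in c (P 0 0) (P a b)" "edge_in c (P 0 0) (P b a)" using corner_edges by auto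
  have s0: "shift b 2 (P 0 0) (P b 0)" using P_shift ab by simp
  show ?thesis
  proof (cases "u = a + b \<and> v = b")
    case True
    have "isgad c b 2 (P 0 0) (P a b) (P b 0) (P u v)"
      unfolding isgad_def using E h(1) s0 P_shift[of u a b] True ab by simp
    thus ?thesis using True ab by fastforce
  next
    case False
    hence "(u = 2*b \<and> v = a) \<or> (u = 0 \<and> v = a)" using cs by blast
    hence "\<bar>u - b\<bar> = b" "v = a" using ab by auto
    hence "isgad c b 2 (P 0 0) (P b a) (P b 0) (P u v)"
      unfolding isgad_def using E h(1) s0 P_shift[of u b b] by simp
    thus ?thesis using \<open>v = a\<close> ab by fastforce
  qed
qed

lemma gad_a: "\<exists>u1 v1 u2 v2. isgad c a 2 (P 0 0) (P u1 v1) (P a 0) (P u2 v2) \<and> 1 \<le> v1 \<and> v1 \<le> a \<and> 1 \<le> v2 \<and> v2 \<le> a"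
proof -
  have "P a 0 \<in> board [n1,n2]" using inb[of a 0] ab by simp
  then obtain u v u' v' where h: "u \<noteq> u' \<or> v \<noteq> v'" "edge_in c (P a 0) (P u v)" "edge_in c (P a 0) (P u' v')"
     "0 \<le> u" "0 \<le> v" "0 \<le> u'" "0 \<le> v'" "rel a 0 u v" "rel a 0 u' v'"
    using nb by blast
  obtain U V where H: "edge_in c (P a 0) (P U V)" "0 \<le> U" "0 \<le> V" "rel a 0 U V" "\<not> (U = a - b \<and> V = a)"
  proof (cases "u = a - b \<and> v = a")
    case True
    hence "\<not> (u' = a - b \<and> v' = a)" using h(1) by auto
    thus ?thesis using that h by blast
  next
    case False thus ?thesis using that h by blast
  qed
  have cs: "(U = 0 \<and> V = b) \<or> (U = 2*a \<and> V = b) \<or> (U = a + b \<and> V = a)"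
    using H(2-5) ab unfolding rel_def by auto
  have E: "edge_in c (P 0 0) (P a b)" "edge_in c (P 0 0) (P b a)" using corner_edges by auto
  have s0: "shift a 2 (P 0 0) (P a 0)" using P_shift ab by simp
  show ?thesis
  proof (cases "U = a + b \<and> V = a")
    case True
    have "isgad c a 2 (P 0 0) (P b a) (P a 0) (P U V)"
      unfolding isgad_def using E H(1) s0 P_shift[of U b a] True ab by simp
    thus ?thesis using True ab by fastforce
  next
    case False
    hence "(U = 0 \<and> V = b) \<or> (U = 2*a \<and> V = b)" using cs by blast
    hence "\<bar>U - a\<bar> = a" "V = b" using ab by auto
    hence "isgad c a 2 (P 0 0) (P a b) (P a 0) (P U V)"
      unfolding isgad_def using E H(1) s0 P_shift[of U a a] by simp
    thus ?thesis using \<open>V = b\<close> ab by fastforce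
  qed
qed

end



lemma pair_dist:
  assumes d: "distinct es" and l: "length fs = length es"
    and q1: "\<forall>e\<in>set es. Q e" and q2: "\<forall>f\<in>set fs. \<not> Q f"
  shows "distinct (map2 (\<lambda>e f. {e,f}) es fs)"
  unfolding distinct_conv_nth
proof (intro allI impI)
  fix i j assume ij: "i < length (map2 (\<lambda>e f. {e,f}) es fs)" "j < length (map2 (\<lambda>e f. {e,f}) es fs)" "i \<noteq> j"
  hence i: "i < length es" "i < length fs" and j: "j < length es" "j < length fs" using l by simp_all
  have mi: "map2 (\<lambda>e f. {e,f}) es fs ! i = {es!i, fs!i}" using i by simp
  have mj: "map2 (\<lambda>e f. {e,f}) es fs ! j = {es!j, fs!j}" using j by simp
  show "map2 (\<lambda>e f. {e,f}) es fs ! i \<noteq> map2 (\<lambda>e f. {e,f}) es fs ! j"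
  proof
    assume "map2 (\<lambda>e f. {e,f}) es fs ! i = map2 (\<lambda>e f. {e,f}) es fs ! j"
    hence eq: "{es!i, fs!i} = {es!j, fs!j}" using mi mj by simp
    have "es!i \<in> {es!j, fs!j}" using eq[symmetric] by (metis insertI1)
    hence "es!i = es!j \<or> es!i = fs!j" by simp
    moreover have "Q (es!i)" using q1 i by simp
    moreover have "\<not> Q (fs!j)" using q2 j by simp
    moreover have "es!i \<noteq> es!j" using d i j ij(3) by (simp add: nth_eq_iff_index_eq)
    ultimately show False by auto
  qed
qed

lemma base:
  assumes ab: "0 < b" "b < a" and n: "2*a+1 \<le> n1" "2*a+1 \<le> n2" and t: "ab_tour a b [n1,n2] c"
  shows "GOOD a b [n1,n2]"
proof -
  interpret A: corner a b n1 n2 c 1 1 1 1 using assms by unfold_locales auto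
  interpret D: corner a b n1 n2 c n1 "-1" n2 "-1" using assms by unfold_locales auto
  interpret B: corner a b n1 n2 c n1 "-1" 1 1 using assms by unfold_locales auto
  interpret E: corner a b n1 n2 c 1 1 n2 "-1" using assms by unfold_locales auto
  obtain au1 av1 au2 av2 where GA: "isgad c b 2 (A.P 0 0) (A.P au1 av1) (A.P b 0) (A.P au2 av2)"
    "1 \<le> av1" "av1 \<le> a" "1 \<le> av2" "av2 \<le> a" using A.gad_b by blast
  obtain du1 dv1 du2 dv2 where GD: "isgad c b 2 (D.P 0 0) (D.P du1 dv1) (D.P b 0) (D.P du2 dv2)"
    "1 \<le> dv1" "dv1 \<le> a" "1 \<le> dv2" "dv2 \<le> a" using D.gad_b by blast
  obtain bu1 bv1 bu2 bv2 where GB: "isgad c a 2 (B.P 0 0) (B.P bu1 bv1) (B.P a 0) (B.P bu2 bv2)"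
    "1 \<le> bv1" "bv1 \<le> a" "1 \<le> bv2" "bv2 \<le> a" using B.gad_a by blast
  obtain eu1 ev1 eu2 ev2 where GE: "isgad c a 2 (E.P 0 0) (E.P eu1 ev1) (E.P a 0) (E.P eu2 ev2)"
    "1 \<le> ev1" "ev1 \<le> a" "1 \<le> ev2" "ev2 \<le> a" using E.gad_a by blast
  let ?es = "[A.P 0 0, A.P b 0, D.P 0 0, D.P b 0, B.P 0 0, B.P a 0, E.P 0 0, E.P a 0]"
  let ?fs = "[A.P au1 av1, A.P au2 av2, D.P du1 dv1, D.P du2 dv2, B.P bu1 bv1, B.P bu2 bv2, E.P eu1 ev1, E.P eu2 ev2]"
  have es: "?es = [[1,1],[1+b,1],[n1,n2],[n1-b,n2],[n1,1],[n1-a,1],[1,n2],[1+a,n2]]"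
    unfolding A.P_def D.P_def B.P_def E.P_def by simp
  have fs: "?fs = [[1+au1,1+av1],[1+au2,1+av2],[n1-du1,n2-dv1],[n1-du2,n2-dv2],
                   [n1-bu1,1+bv1],[n1-bu2,1+bv2],[1+eu1,n2-ev1],[1+eu2,n2-ev2]]"
    unfolding A.P_def D.P_def B.P_def E.P_def by simp
  have de: "distinct ?es" unfolding es using ab n by simp
  have q1: "\<forall>e\<in>set ?es. e!1 = 1 \<or> e!1 = n2" unfolding es by simp
  have q2: "\<forall>f\<in>set ?fs. \<not> (f!1 = 1 \<or> f!1 = n2)" unfolding fs using ab n GA(2-5) GD(2-5) GB(2-5) GE(2-5) by simp
  have "distinct (map2 (\<lambda>e f. {e,f}) ?es ?fs)" by (rule pair_dist[OF de _ q1 q2]) simp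
  hence D8: "distinct [{A.P 0 0, A.P au1 av1}, {A.P b 0, A.P au2 av2}, {D.P 0 0, D.P du1 dv1}, {D.P b 0, D.P du2 dv2},
     {B.P 0 0, B.P bu1 bv1}, {B.P a 0, B.P bu2 bv2}, {E.P 0 0, E.P eu1 ev1}, {E.P a 0, E.P eu2 ev2}]" by simp
  have l2: "length [n1,n2] = 2" by simp
  show ?thesis unfolding GOOD_def l2 using t GA(1) GD(1) GB(1) GE(1) D8 by blast
qed

lemma take2: "2 \<le> length ns \<Longrightarrow> take 2 ns = [ns!0, ns!1]"
  by (cases ns; cases "tl ns") auto

theorem theorem5p5:
  fixes \<alpha> \<beta> :: int and ns :: "int list"
  assumes "0 < \<beta>" and "\<beta> < \<alpha>"
    and "2 \<le> length ns"
    and "ns ! 0 \<ge> 2 * \<alpha> + 1" and "ns ! 1 \<ge> 2 * \<alpha> + 1"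
    and "\<forall>i. 2 \<le> i \<and> i < length ns \<longrightarrow> ns ! i \<ge> \<alpha> + \<beta> - 1"
    and "has_ab_tour \<alpha> \<beta> [ns ! 0, ns ! 1]"
  shows "has_ab_tour \<alpha> \<beta> ns"
proof -
  obtain c where t: "ab_tour \<alpha> \<beta> [ns!0, ns!1] c" using assms(7) unfolding has_ab_tour_def by blast
  have cop: "coprime \<alpha> \<beta>" using tour2_cop[OF assms(1,2) t] assms(1,2,4,5) by simp
  have G2: "GOOD \<alpha> \<beta> [ns!0, ns!1]" using base[OF assms(1,2) _ _ t] assms(4,5) by simp
  have G: "\<And>n. 2 + n \<le> length ns \<Longrightarrow> GOOD \<alpha> \<beta> (take (2+n) ns)"
  proof -
    fix n show "2 + n \<le> length ns \<Longrightarrow> GOOD \<alpha> \<beta> (take (2+n) ns)"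
    proof (induction n)
      case 0 thus ?case using G2 take2[OF assms(3)] by simp
    next
      case (Suc n)
      hence lt: "2 + n < length ns" by simp
      have "take (2 + Suc n) ns = take (2+n) ns @ [ns!(2+n)]"
        using take_Suc_conv_app_nth[OF lt] by simp
      moreover have "\<alpha> + \<beta> - 1 \<le> ns!(2+n)" using assms(6) lt by simp
      moreover have "GOOD \<alpha> \<beta> (take (2+n) ns)" using Suc by simp
      ultimately show ?case using good_step[OF assms(1,2) cop] by simp
    qed
  qed
  have e: "2 + (length ns - 2) = length ns" using assms(3) by simp
  have "GOOD \<alpha> \<beta> (take (2 + (length ns - 2)) ns)" by (rule G) (simp only: e)
  hence "GOOD \<alpha> \<beta> (take (length ns) ns)" by (simp only: e)
  hence "GOOD \<alpha> \<beta> ns" by simp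
  thus ?thesis unfolding GOOD_def has_ab_tour_def by blast
qed


end
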